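(* Let $\tilde d_2$ be a metric on $\mathbb R^2$ for which there exist continuous functions $g_1,g_2:[0,\infty)\to[0,\infty)$ with $g_1(1)=g_2(1)=1$ such that $\tilde d_2(x,y)=g_1(|x-y|)$ whenever $x_1=y_1$, and $\tilde d_2(x,y)=g_2(|x-y|)$ whenever $x_2=y_2=0$ (where $x=(x_1,x_2)$, $y=(y_1,y_2)$). Then the following are equivalent: (i) $\tilde d_2=d_2$; (ii) $\mathcal C_{\tilde d_2}(P_1,P_2)=\mathcal C_{d_2}(P_1,P_2)$ for all $P_1,P_2\in\mathbb R^2$.
   Context: $|\cdot|$ is the Euclidean norm. The river metric on $\mathbb R^2$ is $d_2(A,B)=|A_2-B_2|$ if $A_1=B_1$, and $d_2(A,B)=|A_2|+|A_1-B_1|+|B_2|$ if $A_1\neq B_1$, for $A=(A_1,A_2)$, $B=(B_1,B_2)$. For a metric $d$ on a set $M$ and $A,B\in M$, $\mathcal C_d(A,B)=\{X\in M:\ d(X,A)=d(X,B)+d(A,B)<+\infty\}$. *)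

theory Defs
  imports "HOL-Analysis.Analysis"
begin

(* Points of R^2 are pairs (x1,x2) :: real \<times> real; on this type dist is the Euclidean
   distance sqrt((x1-y1)^2 + (x2-y2)^2). *)

definition river_metric :: "real \<times> real \<Rightarrow> real \<times> real \<Rightarrow> real" where
  "river_metric A B =
     (if fst A = fst B then \<bar>snd A - snd B\<bar>
      else \<bar>snd A\<bar> + \<bar>fst A - fst B\<bar> + \<bar>snd B\<bar>)"

definition is_metric :: "('a \<Rightarrow> 'a \<Rightarrow> real) \<Rightarrow> bool" where
  "is_metric d \<longleftrightarrow>
     (\<forall>x y. 0 \<le> d x y) \<and> (\<forall>x y. d x y = 0 \<longleftrightarrow> x = y) \<and>
     (\<forall>x y. d x y = d y x) \<and> (\<forall>x y z. d x z \<le> d x y + d y z)"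

(* C_d(A,B) = {X. d(X,A) = d(X,B) + d(A,B)}; finiteness is automatic for real-valued d *)
definition metric_C :: "('a \<Rightarrow> 'a \<Rightarrow> real) \<Rightarrow> 'a \<Rightarrow> 'a \<Rightarrow> 'a set" where
  "metric_C d A B = {X. d X A = d X B + d A B}"

end

theory Submission
  imports Defs
begin

lemma additive_linear:
  fixes f :: "real \<Rightarrow> real"
  assumes add: "\<And>s t. s \<ge> 0 \<Longrightarrow> t \<ge> 0 \<Longrightarrow> f (s + t) = f s + f t"
    and nn: "\<And>t. t \<ge> 0 \<Longrightarrow> f t \<ge> 0"
    and one: "f 1 = 1"
    and t: "t \<ge> 0"
  shows "f t = t"
proof -
  have mult: "f (real n * s) = real n * f s" if "s \<ge> 0" for n s
  proof (induction n)
    case 0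
    have "f 0 = f 0 + f 0" using add[of 0 0] by simp
    then show ?case by simp
  next
    case (Suc n)
    have "f (real (Suc n) * s) = f (real n * s + s)" by (simp add: algebra_simps)
    also have "\<dots> = f (real n * s) + f s" using add that by simp
    finally show ?case using Suc by (simp add: algebra_simps)
  qed
  have inv: "f (1 / real n) = 1 / real n" if "n > 0" for n
  proof -
    have "f (real n * (1 / real n)) = real n * f (1 / real n)" by (rule mult) simp
    moreover have "real n * (1 / real n) = 1" using that by simp
    ultimately have "1 = real n * f (1 / real n)" using one by simp
    then show ?thesis using that by (simp add: field_simps)
  qed
  have rat: "f (real m / real n) = real m / real n" if "n > 0" for m n
  proof -
    have "f (real m * (1 / real n)) = real m * f (1/real n)" by (rule mult) simp
    then show ?thesis using inv[OF that] by simp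
  qed
  have mono: "f s \<le> f u" if "0 \<le> s" "s \<le> u" for s u
  proof -
    have "f u = f s + f (u - s)" using add[of s "u - s"] that by simp
    then show ?thesis using nn[of "u - s"] that by simp
  qed
  have bound: "\<bar>f t - t\<bar> \<le> 1 / real n" if "n > 0" for n
  proof -
    define m where "m = nat \<lfloor>real n * t\<rfloor>"
    have fl: "real m = of_int \<lfloor>real n * t\<rfloor>" using t by (simp add: m_def)
    have l: "real m \<le> real n * t" using fl by linarith
    have u: "real n * t \<le> real m + 1" using fl by linarith
    have npos: "real n > 0" using that by simp
    have l': "real m / real n \<le> t" using l npos by (simp add: field_simps)
    have u': "t \<le> real (m+1) / real n" using u npos by (simp add: field_simps)
    have a: "real m / real n \<le> f t" using mono[OF _ l'] rat[OF that] by simp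
    have b: "f t \<le> real (m+1) / real n" using mono[OF t u'] rat[OF that, of "m+1"] by simp
    have "real (m+1) / real n = real m / real n + 1 / real n" by (simp add: add_divide_distrib)
    then show ?thesis using a b l' u' by linarith
  qed
  show ?thesis
  proof (rule ccontr)
    assume "f t \<noteq> t"
    then have e: "\<bar>f t - t\<bar> > 0" by simp
    obtain n :: nat where n: "real n > 1 / \<bar>f t - t\<bar>" using reals_Archimedean2 by blast
    have "n > 0" using n e by (metis divide_pos_pos gr0I of_nat_0 order.asym zero_less_one)
    have "1 / real n < \<bar>f t - t\<bar>" using n e \<open>n > 0\<close> by (simp add: field_simps)
    then show False using bound[OF \<open>n>0\<close>] by simp
  qed
qed

theorem theorem3p5:
  fixes d :: "real \<times> real \<Rightarrow> real \<times> real \<Rightarrow> real"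
    and g1 g2 :: "real \<Rightarrow> real"
  assumes "is_metric d"
    and "continuous_on {0..} g1" and "continuous_on {0..} g2"
    and "g1 ` {0..} \<subseteq> {0..}" and "g2 ` {0..} \<subseteq> {0..}"
    and "g1 1 = 1" and "g2 1 = 1"
    and "\<And>x y. fst x = fst y \<Longrightarrow> d x y = g1 (dist x y)"
    and "\<And>x y. snd x = 0 \<Longrightarrow> snd y = 0 \<Longrightarrow> d x y = g2 (dist x y)"
  shows "d = river_metric \<longleftrightarrow>
         (\<forall>P1 P2. metric_C d P1 P2 = metric_C river_metric P1 P2)"
proof
  assume "d = river_metric" then show "\<forall>P1 P2. metric_C d P1 P2 = metric_C river_metric P1 P2" by simp
next
  assume H: "\<forall>P1 P2. metric_C d P1 P2 = metric_C river_metric P1 P2"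
  have C: "d X A = d X B + d A B" if "river_metric X A = river_metric X B + river_metric A B" for X A B
  proof -
    have "X \<in> metric_C river_metric A B" using that by (simp add: metric_C_def)
    then have "X \<in> metric_C d A B" using H by blast
    then show ?thesis by (simp add: metric_C_def)
  qed
  have M: "\<And>x y. 0 \<le> d x y" "\<And>x. d x x = 0" "\<And>x y. d x y = d y x"
    using assms(1) unfolding is_metric_def by auto
  have g1: "g1 t = t" if "t \<ge> 0" for t
  proof (rule additive_linear[where f=g1, OF _ _ assms(6) that])
    fix s u :: real assume su: "s \<ge> 0" "u \<ge> 0"
    have "d (0,0) (0,s+u) = d (0,0) (0,s) + d (0,s+u) (0,s)"
      by (rule C) (use su in \<open>simp add: river_metric_def\<close>)
    then show "g1 (s + u) = g1 s + g1 u" using su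
      by (simp add: assms(8) dist_Pair_Pair dist_real_def add.commute)
  next
    fix s :: real assume "s \<ge> 0" then show "g1 s \<ge> 0" using assms(4) by auto
  qed
  have g2: "g2 t = t" if "t \<ge> 0" for t
  proof (rule additive_linear[where f=g2, OF _ _ assms(7) that])
    fix s u :: real assume su: "s \<ge> 0" "u \<ge> 0"
    have "d (0,0) (s+u,0) = d (0,0) (s,0) + d (s+u,0) (s,0)"
      by (rule C) (use su in \<open>simp add: river_metric_def\<close>)
    then show "g2 (s + u) = g2 s + g2 u" using su
      by (simp add: assms(9) dist_Pair_Pair dist_real_def add.commute)
  next
    fix s :: real assume "s \<ge> 0" then show "g2 s \<ge> 0" using assms(5) by auto
  qed
  have V: "d x y = \<bar>snd x - snd y\<bar>" if "fst x = fst y" for x y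
    using that assms(8)[OF that] g1
    by (cases x, cases y) (simp add: dist_Pair_Pair dist_real_def)
  have Hz: "d (a,0) (b,0) = \<bar>a - b\<bar>" for a b
    using assms(9)[of "(a,0)" "(b,0)"] g2 by (simp add: dist_Pair_Pair dist_real_def)
  show "d = river_metric"
  proof (intro ext)
    fix A B :: "real \<times> real"
    obtain a1 a2 b1 b2 where AB: "A = (a1,a2)" "B = (b1,b2)" by (cases A, cases B)
    show "d A B = river_metric A B"
    proof (cases "a1 = b1")
      case True then show ?thesis using V[of A B] AB by (simp add: river_metric_def)
    next
      case False
      have 1: "d A B = d A (a1,0) + d B (a1,0)"
        using C[of A B "(a1,0)"] False AB M(3)[of B "(a1,0)"]
        by (simp add: river_metric_def)
      have 2: "d B (a1,0) = d B (b1,0) + d (a1,0) (b1,0)"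
        using C[of B "(a1,0)" "(b1,0)"] False AB
        by (simp add: river_metric_def)
      show ?thesis using 1 2 False AB V[of A "(a1,0)"] V[of B "(b1,0)"] Hz[of a1 b1]
        by (simp add: river_metric_def)
    qed
  qed
qed

end
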